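(* Assume the payoffs are normalized with $T=1$, $S=0$. Assume X uses a memory-one strategy $\mathbf p$ with $\mathbf p-(1,1,0,0)=\gamma(\bar\alpha\mathbf S_X+\bar\beta\mathbf S_Y+\mathbf 1)$, $\gamma>0$, and let $-Z^{-1}=\bar\alpha+\bar\beta$. Assume Y uses an arbitrary strategy pattern, and let $s_X,s_Y$ be the expected payoffs for any associated limit distribution. (a) If $\bar\alpha=0$ then $s_Y=Z$. If $\bar\alpha\neq0$ then the following are equivalent: (i) $s_Y=s_X$; (ii) $s_Y=Z$; (iii) $s_X=Z$. (b) If $s_Y>s_X$ then: $\bar\alpha>0\Rightarrow Z>s_Y>s_X$; $\bar\alpha=0\Rightarrow Z=s_Y>s_X$; $\bar\alpha<0\Rightarrow s_Y>Z>s_X$. (c) If $s_X>s_Y$ then: $\bar\alpha>0\Rightarrow s_X>s_Y>Z$; $\bar\alpha=0\Rightarrow s_X>s_Y=Z$; $\bar\alpha<0\Rightarrow s_X>Z>s_Y$.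
   Context: Iterated Prisoner's Dilemma with normalized payoffs $T=1>R>P>S=0$ and $2R>1$; outcomes ordered $cc,cd,dc,dd$ (first letter X's play, second Y's; $c$ = cooperate, $d$ = defect); payoff vectors $\mathbf S_X=(R,0,1,P)$, $\mathbf S_Y=(R,1,0,P)$, $\mathbf 1=(1,1,1,1)$. A memory-one strategy for X is $\mathbf p\in[0,1]^4$, $p_i$ the probability X plays $c$ after outcome $i$ of the previous round. A strategy pattern for Y is any (possibly randomized, history-dependent) rule for Y's play. With $\mathbf v^n$ the distribution of the outcome of round $n$, a limit distribution is any limit point $\mathbf v$ of the Cesàro averages $\frac1n\sum_{k\le n}\mathbf v^k$, with expected payoffs $s_X=\langle\mathbf v\cdot\mathbf S_X\rangle$, $s_Y=\langle\mathbf v\cdot\mathbf S_Y\rangle$. *)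

theory Defs
  imports Complex_Main
begin

text \<open>Outcomes of one round, ordered cc, cd, dc, dd (first letter: X's play).\<close>
datatype outcome = CC | CD | DC | DD

fun x_coop :: "outcome \<Rightarrow> bool" where
  "x_coop CC = True" | "x_coop CD = True" | "x_coop DC = False" | "x_coop DD = False"

fun y_coop :: "outcome \<Rightarrow> bool" where
  "y_coop CC = True" | "y_coop CD = False" | "y_coop DC = True" | "y_coop DD = False"

fun SX :: "real \<Rightarrow> real \<Rightarrow> outcome \<Rightarrow> real" where
  "SX R P CC = R" | "SX R P CD = 0" | "SX R P DC = 1" | "SX R P DD = P"

fun SY :: "real \<Rightarrow> real \<Rightarrow> outcome \<Rightarrow> real" where
  "SY R P CC = R" | "SY R P CD = 1" | "SY R P DC = 0" | "SY R P DD = P"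

text \<open>The vector (1,1,0,0).\<close>
definition e12 :: "outcome \<Rightarrow> real" where
  "e12 w = (if x_coop w then 1 else 0)"

definition memory_one :: "(outcome \<Rightarrow> real) \<Rightarrow> bool" where
  "memory_one p \<longleftrightarrow> (\<forall>w. 0 \<le> p w \<and> p w \<le> 1)"

text \<open>A strategy pattern for Y: a behaviour strategy giving, for each history of
  previous outcomes (oldest first), the probability that Y cooperates.\<close>
definition strategy_pattern :: "(outcome list \<Rightarrow> real) \<Rightarrow> bool" where
  "strategy_pattern q \<longleftrightarrow> (\<forall>h. 0 \<le> q h \<and> q h \<le> 1)"

text \<open>Probability of outcome w in the next round given history h; X plays p
  (first-round cooperation probability p0), Y plays q; moves are chosen independently
  given the history.\<close>
definition round_prob ::
  "(outcome \<Rightarrow> real) \<Rightarrow> real \<Rightarrow> (outcome list \<Rightarrow> real) \<Rightarrow> outcome list \<Rightarrow> outcome \<Rightarrow> real" where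
  "round_prob p p0 q h w =
     (let a = (if h = [] then p0 else p (last h)); b = q h
      in (if x_coop w then a else 1 - a) * (if y_coop w then b else 1 - b))"

definition hist_prob ::
  "(outcome \<Rightarrow> real) \<Rightarrow> real \<Rightarrow> (outcome list \<Rightarrow> real) \<Rightarrow> outcome list \<Rightarrow> real" where
  "hist_prob p p0 q h = (\<Prod>k<length h. round_prob p p0 q (take k h) (h ! k))"

text \<open>Distribution of the outcome of round n (rounds numbered from 1).\<close>
definition round_dist ::
  "(outcome \<Rightarrow> real) \<Rightarrow> real \<Rightarrow> (outcome list \<Rightarrow> real) \<Rightarrow> nat \<Rightarrow> outcome \<Rightarrow> real" where
  "round_dist p p0 q n w =
     (\<Sum>h\<in>{h. length h = n - 1}. hist_prob p p0 q h * round_prob p p0 q h w)"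

definition cesaro ::
  "(outcome \<Rightarrow> real) \<Rightarrow> real \<Rightarrow> (outcome list \<Rightarrow> real) \<Rightarrow> nat \<Rightarrow> outcome \<Rightarrow> real" where
  "cesaro p p0 q n w = (\<Sum>k=1..n. round_dist p p0 q k w) / real n"

text \<open>v is a limit distribution: a limit point of the Cesaro averages (n \<ge> 1).\<close>
definition limit_dist ::
  "(outcome \<Rightarrow> real) \<Rightarrow> real \<Rightarrow> (outcome list \<Rightarrow> real) \<Rightarrow> (outcome \<Rightarrow> real) \<Rightarrow> bool" where
  "limit_dist p p0 q v \<longleftrightarrow>
     (\<exists>r::nat \<Rightarrow> nat. strict_mono r \<and>
        (\<forall>w. (\<lambda>j. cesaro p p0 q (Suc (r j)) w) \<longlonglongrightarrow> v w))"

definition expected :: "(outcome \<Rightarrow> real) \<Rightarrow> (outcome \<Rightarrow> real) \<Rightarrow> real" where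
  "expected v S = v CC * S CC + v CD * S CD + v DC * S DC + v DD * S DD"

end

theory Submission
  imports Defs
begin

lemma UNIV_outcome: "(UNIV::outcome set) = {CC,CD,DC,DD}"
proof -
  have "w \<in> {CC,CD,DC,DD}" for w by (cases w) auto
  then show ?thesis by blast
qed

lemma finite_outcome: "finite (UNIV::outcome set)"
  by (simp add: UNIV_outcome add.assoc)

lemma sum_outcome: "(\<Sum>w\<in>UNIV. f w) = f CC + f CD + f DC + f DD"
  by (simp add: UNIV_outcome add.assoc)

lemma finite_len: "finite {h::outcome list. length h = n}"
  using finite_lists_length_eq[OF finite_outcome, of n] by simp

lemma hist_snoc: "hist_prob p p0 q (h @ [w]) = hist_prob p p0 q h * round_prob p p0 q h w"
  unfolding hist_prob_def
  by (simp add: prod.lessThan_Suc nth_append)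

lemma sum_len_Suc:
  "(\<Sum>h\<in>{h::outcome list. length h = Suc n}. f h) = (\<Sum>h\<in>{h. length h = n}. \<Sum>w\<in>UNIV. f (h@[w]))"
proof -
  have eq: "{h::outcome list. length h = Suc n} = (\<lambda>(h,w). h@[w]) ` ({h. length h = n} \<times> UNIV)"
  proof (rule set_eqI, rule iffI)
    fix h :: "outcome list" assume "h \<in> {h. length h = Suc n}"
    then have "h \<noteq> []" "length (butlast h) = n" by auto
    then show "h \<in> (\<lambda>(h,w). h@[w]) ` ({h. length h = n} \<times> UNIV)"
      by (intro image_eqI[of _ _ "(butlast h, last h)"]) auto
  qed auto
  have inj: "inj_on (\<lambda>(h,w). h@[w]) ({h::outcome list. length h = n} \<times> UNIV)"
    by (auto simp: inj_on_def)
  show ?thesis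
    unfolding eq sum.reindex[OF inj]
    by (simp add: sum.cartesian_product finite_len finite_outcome split_def)
qed

lemma round_sum: "(\<Sum>w\<in>UNIV. round_prob p p0 q h w) = 1"
  by (simp add: sum_outcome round_prob_def Let_def algebra_simps)

lemma round_e12: "(\<Sum>w\<in>UNIV. round_prob p p0 q h w * e12 w) = (if h = [] then p0 else p (last h))"
  by (simp add: sum_outcome round_prob_def Let_def e12_def algebra_simps)

lemma mass: "(\<Sum>h\<in>{h. length h = n}. hist_prob p p0 q h) = 1"
proof (induction n)
  case 0
  have "{h::outcome list. length h = 0} = {[]}" by auto
  then show ?case by (simp add: hist_prob_def)
next
  case (Suc n)
  show ?case
    unfolding sum_len_Suc hist_snoc
    by (simp add: sum_distrib_left[symmetric] round_sum Suc)
qed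

lemma rd_sum: "(\<Sum>w\<in>UNIV. round_dist p p0 q n w) = 1"
  unfolding round_dist_def
  by (subst sum.swap) (simp add: sum_distrib_left[symmetric] round_sum mass)

lemma rd_e12: "(\<Sum>w\<in>UNIV. round_dist p p0 q (Suc n) w * e12 w)
   = (\<Sum>h\<in>{h. length h = n}. hist_prob p p0 q h * (if h = [] then p0 else p (last h)))"
  unfolding round_dist_def
  by (simp add: sum_distrib_right mult.assoc sum_distrib_left[symmetric] round_e12
      flip: sum.swap[of _ UNIV])

lemma key: "(\<Sum>w\<in>UNIV. round_dist p p0 q (Suc n) w * p w)
   = (\<Sum>w\<in>UNIV. round_dist p p0 q (Suc (Suc n)) w * e12 w)"
proof -
  have "(\<Sum>w\<in>UNIV. round_dist p p0 q (Suc (Suc n)) w * e12 w)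
     = (\<Sum>h\<in>{h. length h = n}. \<Sum>w\<in>UNIV. hist_prob p p0 q h * round_prob p p0 q h w * p w)"
    unfolding rd_e12 sum_len_Suc hist_snoc by simp
  also have "\<dots> = (\<Sum>w\<in>UNIV. round_dist p p0 q (Suc n) w * p w)"
    unfolding round_dist_def
    by (simp add: sum_distrib_right flip: sum.swap[of _ UNIV])
  finally show ?thesis by simp
qed

lemma rp_nonneg:
  assumes "memory_one p" "0 \<le> p0" "p0 \<le> 1" "strategy_pattern q"
  shows "0 \<le> round_prob p p0 q h w"
  using assms unfolding round_prob_def Let_def memory_one_def strategy_pattern_def
  by (intro mult_nonneg_nonneg) (auto split: if_splits simp: algebra_simps)

lemma hist_nonneg:
  assumes "memory_one p" "0 \<le> p0" "p0 \<le> 1" "strategy_pattern q"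
  shows "0 \<le> hist_prob p p0 q h"
  unfolding hist_prob_def by (intro prod_nonneg ballI rp_nonneg[OF assms])

lemma c_bounds:
  assumes "memory_one p" "0 \<le> p0" "p0 \<le> 1" "strategy_pattern q"
  shows "0 \<le> (\<Sum>w\<in>UNIV. round_dist p p0 q (Suc n) w * e12 w)"
    "(\<Sum>w\<in>UNIV. round_dist p p0 q (Suc n) w * e12 w) \<le> 1"
proof -
  let ?a = "\<lambda>h. (if h = [] then p0 else p (last h))"
  have a: "0 \<le> ?a h" "?a h \<le> 1" for h using assms unfolding memory_one_def by auto
  have hn: "0 \<le> hist_prob p p0 q h" for h by (rule hist_nonneg[OF assms])
  show "0 \<le> (\<Sum>w\<in>UNIV. round_dist p p0 q (Suc n) w * e12 w)"
    unfolding rd_e12 by (intro sum_nonneg mult_nonneg_nonneg hn a)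
  have "(\<Sum>h\<in>{h. length h = n}. hist_prob p p0 q h * ?a h) \<le> (\<Sum>h\<in>{h. length h = n}. hist_prob p p0 q h)"
    by (intro sum_mono) (metis a(2) hn mult_left_le)
  then show "(\<Sum>w\<in>UNIV. round_dist p p0 q (Suc n) w * e12 w) \<le> 1"
    unfolding rd_e12 mass by simp
qed

lemma cesaro_tele:
  "(\<Sum>w\<in>UNIV. cesaro p p0 q (Suc N) w * (p w - e12 w))
   = ((\<Sum>w\<in>UNIV. round_dist p p0 q (Suc (Suc N)) w * e12 w)
      - (\<Sum>w\<in>UNIV. round_dist p p0 q (Suc 0) w * e12 w)) / real (Suc N)"
proof -
  define c where "c k = (\<Sum>w\<in>UNIV. round_dist p p0 q k w * e12 w)" for k
  have step: "(\<Sum>w\<in>UNIV. round_dist p p0 q k w * (p w - e12 w)) = c (Suc k) - c k"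
    if k1: "1 \<le> k" for k
  proof -
    obtain m where k: "k = Suc m" using k1 by (cases k) auto
    show ?thesis unfolding c_def k key[symmetric]
      by (simp add: algebra_simps sum_subtractf)
  qed
  have "(\<Sum>w\<in>UNIV. cesaro p p0 q (Suc N) w * (p w - e12 w))
     = (\<Sum>k=1..Suc N. \<Sum>w\<in>UNIV. round_dist p p0 q k w * (p w - e12 w)) / real (Suc N)"
  proof -
    have "(\<Sum>w\<in>UNIV. cesaro p p0 q (Suc N) w * (p w - e12 w))
        = (\<Sum>w\<in>UNIV. (\<Sum>k=1..Suc N. round_dist p p0 q k w * (p w - e12 w)) / real (Suc N))"
      unfolding cesaro_def times_divide_eq_left sum_distrib_right by (rule refl)
    also have "\<dots> = (\<Sum>w\<in>UNIV. \<Sum>k=1..Suc N. round_dist p p0 q k w * (p w - e12 w)) / real (Suc N)"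
      by (simp add: sum_divide_distrib)
    also have "\<dots> = (\<Sum>k=1..Suc N. \<Sum>w\<in>UNIV. round_dist p p0 q k w * (p w - e12 w)) / real (Suc N)"
      by (subst sum.swap) simp
    finally show ?thesis .
  qed
  also have "\<dots> = (\<Sum>k=1..Suc N. c (Suc k) - c k) / real (Suc N)"
    by (simp add: step)
  also have "\<dots> = (c (Suc (Suc N)) - c 1) / real (Suc N)"
    by (subst sum_Suc_diff) auto
  finally show ?thesis by (simp add: c_def)
qed

lemma cesaro_sum: "(\<Sum>w\<in>UNIV. cesaro p p0 q (Suc N) w) = 1"
proof -
  have "(\<Sum>w\<in>UNIV. \<Sum>k=1..Suc N. round_dist p p0 q k w) = (\<Sum>k=1..Suc N. \<Sum>w\<in>UNIV. round_dist p p0 q k w)"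
    by (rule sum.swap)
  also have "\<dots> = real (Suc N)" by (simp add: rd_sum)
  finally show ?thesis unfolding cesaro_def by (simp add: sum_divide_distrib[symmetric])
qed

lemma akin:
  assumes "memory_one p" "0 \<le> p0" "p0 \<le> 1" "strategy_pattern q" "limit_dist p p0 q v"
  shows "(\<Sum>w\<in>UNIV. v w * (p w - e12 w)) = 0" "(\<Sum>w\<in>UNIV. v w) = 1"
proof -
  from assms(5) obtain r where r: "strict_mono r"
    "\<And>w. (\<lambda>j. cesaro p p0 q (Suc (r j)) w) \<longlonglongrightarrow> v w"
    unfolding limit_dist_def by blast
  have t1: "(\<lambda>j. \<Sum>w\<in>UNIV. cesaro p p0 q (Suc (r j)) w * (p w - e12 w))
      \<longlonglongrightarrow> (\<Sum>w\<in>UNIV. v w * (p w - e12 w))"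
    by (intro tendsto_sum tendsto_mult r(2) tendsto_const)
  have t0: "(\<lambda>j. \<Sum>w\<in>UNIV. cesaro p p0 q (Suc (r j)) w * (p w - e12 w)) \<longlonglongrightarrow> 0"
  proof (rule tendsto_0_le[where f="\<lambda>j. inverse (real (Suc j))" and K=1])
    show "(\<lambda>j. inverse (real (Suc j))) \<longlonglongrightarrow> 0" by (rule LIMSEQ_inverse_real_of_nat)
    show "\<forall>\<^sub>F j in sequentially. norm (\<Sum>w\<in>UNIV. cesaro p p0 q (Suc (r j)) w * (p w - e12 w))
          \<le> norm (inverse (real (Suc j))) * 1"
    proof (rule always_eventually, rule allI)
      fix j
      have rj: "j \<le> r j" using r(1) by (simp add: strict_mono_imp_increasing)
      let ?A = "(\<Sum>w\<in>UNIV. round_dist p p0 q (Suc (Suc (r j))) w * e12 w)"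
      let ?B = "(\<Sum>w\<in>UNIV. round_dist p p0 q (Suc 0) w * e12 w)"
      have b: "0 \<le> ?A" "?A \<le> 1" "0 \<le> ?B" "?B \<le> 1"
        using c_bounds[OF assms(1-4)] by blast+
      have "norm ((?A - ?B) / real (Suc (r j))) \<le> 1 / real (Suc (r j))"
        using b by (simp add: abs_le_iff divide_right_mono)
      also have "\<dots> \<le> inverse (real (Suc j))"
        using rj by (simp add: divide_simps)
      finally show "norm (\<Sum>w\<in>UNIV. cesaro p p0 q (Suc (r j)) w * (p w - e12 w))
          \<le> norm (inverse (real (Suc j))) * 1" unfolding cesaro_tele by simp
    qed
  qed
  show "(\<Sum>w\<in>UNIV. v w * (p w - e12 w)) = 0" using LIMSEQ_unique[OF t1 t0] .
  have s1: "(\<lambda>j. \<Sum>w\<in>UNIV. cesaro p p0 q (Suc (r j)) w) \<longlonglongrightarrow> (\<Sum>w\<in>UNIV. v w)"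
    by (intro tendsto_sum r(2))
  then have "(\<lambda>j. 1::real) \<longlonglongrightarrow> (\<Sum>w\<in>UNIV. v w)" by (simp add: cesaro_sum)
  then show "(\<Sum>w\<in>UNIV. v w) = 1" using LIMSEQ_unique[OF _ tendsto_const] by metis
qed


lemma final_logic:
  fixes a K d x y Z :: real
  assumes Ks: "(a > 0 \<longleftrightarrow> K > 0) \<and> (a = 0 \<longleftrightarrow> K = 0) \<and> (a < 0 \<longleftrightarrow> K < 0)"
    and m1: "K > 0 \<Longrightarrow> d > 0 \<Longrightarrow> x > 0"
    and m2: "K > 0 \<Longrightarrow> d < 0 \<Longrightarrow> x < 0"
    and m3: "K < 0 \<Longrightarrow> d > 0 \<Longrightarrow> x < 0"
    and m4: "K < 0 \<Longrightarrow> d < 0 \<Longrightarrow> x > 0"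
    and m5: "d > 0 \<Longrightarrow> y > 0" and m6: "d < 0 \<Longrightarrow> y < 0"
    and m9: "y = d + x" and m10: "K = 0 \<Longrightarrow> x = 0" and m11: "d = 0 \<Longrightarrow> x = 0"
  shows "(a = 0 \<longrightarrow> Z + x = Z)
     \<and> (a \<noteq> 0 \<longrightarrow> ((Z + x = Z + y \<longleftrightarrow> Z + x = Z) \<and> (Z + x = Z \<longleftrightarrow> Z + y = Z)))
     \<and> (Z + x > Z + y \<longrightarrow>
          (a > 0 \<longrightarrow> Z > Z + x \<and> Z + x > Z + y)
        \<and> (a = 0 \<longrightarrow> Z = Z + x \<and> Z + x > Z + y)
        \<and> (a < 0 \<longrightarrow> Z + x > Z \<and> Z > Z + y))
     \<and> (Z + y > Z + x \<longrightarrow>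
          (a > 0 \<longrightarrow> Z + y > Z + x \<and> Z + x > Z)
        \<and> (a = 0 \<longrightarrow> Z + y > Z + x \<and> Z + x = Z)
        \<and> (a < 0 \<longrightarrow> Z + y > Z \<and> Z > Z + x))"
proof -
  consider "d > 0" | "d = 0" | "d < 0" by linarith
  then show ?thesis
  proof cases
    case 1 then show ?thesis using Ks m1 m3 m5 m9 m10 by (cases "K > 0"; cases "K = 0") auto
  next
    case 2 then show ?thesis using Ks m9 m10 m11 by (cases "K > 0"; cases "K = 0") auto
  next
    case 3 then show ?thesis using Ks m2 m4 m6 m9 m10 by (cases "K > 0"; cases "K = 0") auto
  qed
qed

theorem corollary3p3:
  fixes R P \<gamma> \<alpha> \<beta> Z p0 :: real
    and p :: "outcome \<Rightarrow> real"
    and q :: "outcome list \<Rightarrow> real"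
    and v :: "outcome \<Rightarrow> real"
  assumes payoffs: "0 < P" "P < R" "R < 1" "2 * R > 1"
    and mem1: "memory_one p"
    and zd: "\<forall>w. p w - e12 w = \<gamma> * (\<alpha> * SX R P w + \<beta> * SY R P w + 1)"
    and gpos: "\<gamma> > 0"
    and Zdef: "- (1 / Z) = \<alpha> + \<beta>"
    and p0: "0 \<le> p0" "p0 \<le> 1"
    and Ystrat: "strategy_pattern q"
    and lim: "limit_dist p p0 q v"
  defines "sX \<equiv> expected v (SX R P)" and "sY \<equiv> expected v (SY R P)"
  shows "(\<alpha> = 0 \<longrightarrow> sY = Z)
       \<and> (\<alpha> \<noteq> 0 \<longrightarrow> ((sY = sX \<longleftrightarrow> sY = Z) \<and> (sY = Z \<longleftrightarrow> sX = Z)))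
       \<and> (sY > sX \<longrightarrow>
            (\<alpha> > 0 \<longrightarrow> Z > sY \<and> sY > sX)
          \<and> (\<alpha> = 0 \<longrightarrow> Z = sY \<and> sY > sX)
          \<and> (\<alpha> < 0 \<longrightarrow> sY > Z \<and> Z > sX))
       \<and> (sX > sY \<longrightarrow>
            (\<alpha> > 0 \<longrightarrow> sX > sY \<and> sY > Z)
          \<and> (\<alpha> = 0 \<longrightarrow> sX > sY \<and> sY = Z)
          \<and> (\<alpha> < 0 \<longrightarrow> sX > Z \<and> Z > sY))"
proof -
  have A: "(\<Sum>w\<in>UNIV. v w * (p w - e12 w)) = 0" "(\<Sum>w\<in>UNIV. v w) = 1"
    using akin[OF mem1 p0 Ystrat lim] by auto
  have E0: "(\<Sum>w\<in>UNIV. v w * (\<gamma> * (\<alpha> * SX R P w + \<beta> * SY R P w + 1))) = 0"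
    using A(1) zd by simp
  have "\<gamma> * (\<alpha> * sX + \<beta> * sY + (\<Sum>w\<in>UNIV. v w)) = (\<Sum>w\<in>UNIV. v w * (\<gamma> * (\<alpha> * SX R P w + \<beta> * SY R P w + 1)))"
    unfolding sX_def sY_def expected_def sum_outcome
    by (simp add: algebra_simps)
  then have "\<gamma> * (\<alpha> * sX + \<beta> * sY + 1) = (\<Sum>w\<in>UNIV. v w * (\<gamma> * (\<alpha> * SX R P w + \<beta> * SY R P w + 1)))"
    using A(2) by simp
  then have "\<gamma> * (\<alpha> * sX + \<beta> * sY + 1) = 0" using E0 by simp
  then have E: "\<alpha> * sX + \<beta> * sY + 1 = 0" using gpos by simp
  have pb: "0 \<le> p w" "p w \<le> 1" for w using mem1 unfolding memory_one_def by auto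
  have zCC: "p CC - 1 = \<gamma> * (\<alpha> * R + \<beta> * R + 1)" using zd[rule_format, of CC] by (simp add: e12_def)
  have zCD: "p CD - 1 = \<gamma> * (\<beta> + 1)" using zd[rule_format, of CD] by (simp add: e12_def)
  have zDC: "p DC = \<gamma> * (\<alpha> + 1)" using zd[rule_format, of DC] by (simp add: e12_def)
  have zDD: "p DD = \<gamma> * (\<alpha> * P + \<beta> * P + 1)" using zd[rule_format, of DD] by (simp add: e12_def)
  have c1: "(\<alpha> + \<beta>) * R + 1 \<le> 0"
  proof -
    have "\<gamma> * ((\<alpha> + \<beta>) * R + 1) \<le> 0" using zCC pb[of CC] by (simp add: algebra_simps)
    then show ?thesis using gpos by (simp add: mult_le_0_iff)
  qed
  have c2: "\<beta> + 1 \<le> 0"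
  proof -
    have "\<gamma> * (\<beta> + 1) \<le> 0" using zCD pb[of CD] by simp
    then show ?thesis using gpos by (simp add: mult_le_0_iff)
  qed
  have c3: "\<alpha> + 1 \<ge> 0" using zDC pb[of DC] gpos by (simp add: zero_le_mult_iff)
  have ab: "\<alpha> + \<beta> < 0"
  proof (rule ccontr)
    assume "\<not> \<alpha> + \<beta> < 0"
    then have "(\<alpha> + \<beta>) * R \<ge> 0" using payoffs by simp
    then show False using c1 by simp
  qed
  have Zpos: "Z > 0"
  proof (rule ccontr)
    assume "\<not> Z > 0"
    then have "1 / Z \<le> 0" by (simp add: divide_nonpos_pos divide_le_0_iff)
    then show False using Zdef ab by linarith
  qed
  have ZZ: "(\<alpha> + \<beta>) * Z = -1" using Zdef Zpos
    by (metis divide_minus_left mult.commute nonzero_mult_div_cancel_left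
        divide_self_if less_irrefl minus_mult_right times_divide_eq_right)
  have ZR: "Z \<le> R"
  proof -
    have "(\<alpha> + \<beta>) * R \<le> (\<alpha> + \<beta>) * Z" using c1 ZZ by simp
    then show ?thesis using ab by (simp add: mult_le_cancel_left)
  qed
  define K where "K = \<alpha> * Z"
  have I1: "sY - Z = K * (sX - sY)"
  proof -
    have "\<alpha> * (sX - sY) + (\<alpha> + \<beta>) * (sY - Z) = 0" using E ZZ by (simp add: algebra_simps)
    then have "Z * (\<alpha> * (sX - sY)) + ((\<alpha> + \<beta>) * Z) * (sY - Z) = 0"
      by (metis (no_types, opaque_lifting) distrib_left mult.assoc mult.commute mult_zero_right)
    then have "Z * (\<alpha> * (sX - sY)) + (-1) * (sY - Z) = 0" using ZZ by simp
    then show ?thesis unfolding K_def by (simp add: algebra_simps)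
  qed
  have I2: "sX - Z = (sX - sY) * (1 + K)" using I1 by (simp add: algebra_simps)
  have K1: "1 + K > 0"
  proof -
    have "\<alpha> * Z \<ge> -1 * Z" using c3 Zpos by (intro mult_right_mono) auto
    then show ?thesis unfolding K_def using ZR payoffs by simp
  qed
  have Ks: "(\<alpha> > 0 \<longleftrightarrow> K > 0) \<and> (\<alpha> = 0 \<longleftrightarrow> K = 0) \<and> (\<alpha> < 0 \<longleftrightarrow> K < 0)"
    unfolding K_def using Zpos by (auto simp: zero_less_mult_iff mult_less_0_iff)
  define d where "d = sX - sY"
  have I1': "sY = Z + K * d" using I1 d_def by simp
  have I2': "sX = Z + d * (1 + K)" using I2 d_def by simp
  have dd: "sY > sX \<longleftrightarrow> d < 0" "sX > sY \<longleftrightarrow> d > 0" "sY = sX \<longleftrightarrow> d = 0" unfolding d_def by auto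
  have m1: "K * d > 0" if "K > 0" "d > 0" using that by simp
  have m2: "K * d < 0" if "K > 0" "d < 0" using that by (simp add: mult_pos_neg)
  have m3: "K * d < 0" if "K < 0" "d > 0" using that by (simp add: mult_neg_pos)
  have m4: "K * d > 0" if "K < 0" "d < 0" using that by (simp add: mult_neg_neg)
  have m5: "d * (1 + K) > 0" if "d > 0" using that K1 by simp
  have m6: "d * (1 + K) < 0" if "d < 0" using that K1 by (simp add: mult_neg_pos)
  have m7: "d * (1 + K) = 0 \<longleftrightarrow> d = 0" using K1 by simp
  have m9: "d * (1 + K) = d + K * d" by (simp add: algebra_simps)
  have m10: "K = 0 \<Longrightarrow> K * d = 0" by simp
  have m11: "d = 0 \<Longrightarrow> K * d = 0" by simp
  have m8: "K \<noteq> 0 \<Longrightarrow> K * d = 0 \<longleftrightarrow> d = 0" by simp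
  show ?thesis
    unfolding I1' I2'
    by (rule final_logic[OF Ks m1 m2 m3 m4 m5 m6 m9 m10 m11])
qed

end
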